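(* Let $f$ be a tolerance function with $0<f(K)<K$. For given $\mathbf x,\mathbf y$, let $p=\lim_{n\to\infty}P(\mathbf y\in L(\mathbf x))<1$. Then $P(\mathbf y\in I(\mathbf x,f))=0$ holds if $$\lim_{K\to\infty}\frac{f(K)\ln K}{K}<-\ln p.$$ Furthermore, if $p<0.5$, then $P(\mathbf y\in I(\mathbf x,f))=0$ holds as soon as $\lim_{K\to\infty}f(K)/K=0$. Finally, for any such $f$, $\lim_{n\to\infty}P(\mathbf y\in L(\mathbf x))=1$ implies $P(\mathbf y\in I(\mathbf x,f))=1$.
   Context: Setting: $n$ instances form the dataset $\mathcal D=\mathcal D_n$; a forest $\Theta_K$ of $K$ axis-aligned causal trees is built on $\mathcal D$, the trees independent given $\mathcal D$. $L_k(\mathbf x)$ is the leaf of tree $k$ containing $\mathbf x$, $I(\mathbf x,\theta_k)$ its box; $P(\mathbf y\in L(\mathbf x))=P(\mathbf y\in L_k(\mathbf x)\mid\mathcal D)$, same for every $k$, with the events independent across $k$. LILI with $K$ trees under tolerance function $f$: $I(\mathbf x,\Theta_K,f)=\bigcup_{s>K-f(K)}\bigcup_{1\le i_1<\cdots<i_s\le K}\bigcap_{k=1}^sI(\mathbf x,\theta_{i_k})$, i.e. $\mathbf y\in I(\mathbf x,\Theta_K,f)$ iff the number of $k$ with $\mathbf y\in L_k(\mathbf x)$ exceeds $K-f(K)$; $P(\mathbf y\in I(\mathbf x,f)):=\lim_{K\to\infty}\lim_{n\to\infty}P(\mathbf y\in I(\mathbf x,\Theta_K,f)\mid\mathcal D_n)$.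 *)

theory Defs
  imports "HOL-Probability.Probability"
begin

text \<open>Probability, given the data set, that y lies in the LILI interval of x built from K
  trees when each tree independently puts y into the leaf of x with probability q:
  the number of trees k < K with y in L_k(x) must exceed K - f K.\<close>
definition lili_prob :: "(nat \<Rightarrow> real) \<Rightarrow> nat \<Rightarrow> real \<Rightarrow> real" where
  "lili_prob f K q =
     measure_pmf.prob (Pi_pmf {..<K} False (\<lambda>_. bernoulli_pmf q))
       {\<omega>. real (card {k\<in>{..<K}. \<omega> k}) > real K - f K}"

text \<open>P(y in I(x,f)) = lim_K lim_n P(y in I(x,Theta_K,f) | D_n), where pn n is
  P(y in L(x) | D_n). We say this iterated limit equals c if all inner limits exist and
  the outer limit is c.\<close>
definition lili_limit_is :: "(nat \<Rightarrow> real) \<Rightarrow> (nat \<Rightarrow> real) \<Rightarrow> real \<Rightarrow> bool" where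
  "lili_limit_is f pn c \<longleftrightarrow>
     (\<forall>K. convergent (\<lambda>n. lili_prob f K (pn n))) \<and>
     ((\<lambda>K. lim (\<lambda>n. lili_prob f K (pn n))) \<longlonglongrightarrow> c)"

end

theory Submission
  imports Defs "HOL-Real_Asymp.Real_Asymp"
begin


lemma lp_sum:
  assumes q: "0 \<le> q" "q \<le> 1"
  shows "lili_prob f K q = (\<Sum>j\<in>{j. j \<le> K \<and> real j > real K - f K}. real (K choose j) * q^j * (1-q)^(K-j))"
proof -
  let ?A = "{j::nat. real j > real K - f K}"
  have "binomial_pmf K q = map_pmf (\<lambda>g. card {x\<in>{..<K}. g x}) (Pi_pmf {..<K} False (\<lambda>_. bernoulli_pmf q))"
    by (rule binomial_pmf_altdef') (use q in auto)
  hence "lili_prob f K q = measure_pmf.prob (binomial_pmf K q) ?A"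
    unfolding lili_prob_def by (simp add: vimage_def)
  also have "\<dots> = measure_pmf.prob (binomial_pmf K q) (?A \<inter> set_pmf (binomial_pmf K q))"
    by (rule measure_Int_set_pmf[symmetric])
  also have "\<dots> = sum (pmf (binomial_pmf K q)) (?A \<inter> set_pmf (binomial_pmf K q))"
    by (rule measure_measure_pmf_finite) (use q in \<open>auto simp: set_pmf_binomial_eq\<close>)
  also have "\<dots> = sum (pmf (binomial_pmf K q)) {j. j \<le> K \<and> real j > real K - f K}"
  proof (rule sum.mono_neutral_left)
    show "finite {j. j \<le> K \<and> real j > real K - f K}" by simp
    show "?A \<inter> set_pmf (binomial_pmf K q) \<subseteq> {j. j \<le> K \<and> real j > real K - f K}"
      using q by (auto simp: set_pmf_binomial_eq split: if_splits)
    show "\<forall>i\<in>{j. j \<le> K \<and> real j > real K - f K} - ?A \<inter> set_pmf (binomial_pmf K q).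
           pmf (binomial_pmf K q) i = 0"
      by (auto simp: set_pmf_iff)
  qed
  also have "\<dots> = (\<Sum>j\<in>{j. j \<le> K \<and> real j > real K - f K}. real (K choose j) * q^j * (1-q)^(K-j))"
    using q by simp
  finally show ?thesis .
qed



lemma lp_bound:
  assumes q: "0 < q" "q < 1"
  shows "lili_prob f K q \<le> (\<Sum>j\<in>{j. j \<le> K \<and> real j > real K - f K}. real (K choose j)) * (q^K / q powr f K)"
proof -
  have "lili_prob f K q = (\<Sum>j\<in>{j. j \<le> K \<and> real j > real K - f K}. real (K choose j) * q^j * (1-q)^(K-j))"
    using q by (intro lp_sum) auto
  also have "\<dots> \<le> (\<Sum>j\<in>{j. j \<le> K \<and> real j > real K - f K}. real (K choose j) * (q^K / q powr f K))"
  proof (rule sum_mono)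
    fix j assume "j \<in> {j. j \<le> K \<and> real j > real K - f K}"
    hence j: "j \<le> K" "real (K - j) < f K" by auto
    have "q powr f K \<le> q powr real (K - j)"
      using q j by (intro powr_mono') auto
    also have "\<dots> = q ^ (K - j)" using q by (simp add: powr_realpow)
    finally have "q^j * q powr f K \<le> q^j * q^(K-j)"
      using q by (intro mult_left_mono) auto
    also have "\<dots> = q^K" using j by (simp flip: power_add)
    finally have h: "q^j \<le> q^K / q powr f K" using q by (simp add: field_simps)
    have "q^j * (1-q)^(K-j) \<le> q^j * 1"
      using q by (intro mult_left_mono power_le_one) auto
    also have "\<dots> \<le> q^K / q powr f K" using h by simp
    finally have "q^j * (1-q)^(K-j) \<le> q^K / q powr f K" .
    hence "real (K choose j) * (q^j * (1-q)^(K-j)) \<le> real (K choose j) * (q^K / q powr f K)"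
      by (rule mult_left_mono) simp
    thus "real (K choose j) * q^j * (1-q)^(K-j) \<le> real (K choose j) * (q^K / q powr f K)"
      by (simp only: mult.assoc)
  qed
  also have "\<dots> = (\<Sum>j\<in>{j. j \<le> K \<and> real j > real K - f K}. real (K choose j)) * (q^K / q powr f K)"
    by (rule sum_distrib_right[symmetric])
  finally show ?thesis .
qed

lemma choose_sum1:
  assumes "K \<ge> 1"
  shows "(\<Sum>j\<in>{j. j \<le> K \<and> real j > real K - f K}. real (K choose j)) \<le> (real K + 1) * real K powr f K"
proof -
  have "(\<Sum>j\<in>{j. j \<le> K \<and> real j > real K - f K}. real (K choose j))
      \<le> (\<Sum>j\<in>{j. j \<le> K \<and> real j > real K - f K}. real K powr f K)"
  proof (rule sum_mono)
    fix j assume "j \<in> {j. j \<le> K \<and> real j > real K - f K}"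
    hence j: "j \<le> K" "real (K - j) < f K" by auto
    have "real (K choose j) = real (K choose (K - j))" using j by (simp add: binomial_symmetric[symmetric])
    also have "\<dots> \<le> real (K ^ (K - j))" by (simp only: of_nat_le_iff binomial_le_pow)
    also have "\<dots> = real K powr real (K - j)" using assms by (simp add: powr_realpow)
    also have "\<dots> \<le> real K powr f K" using assms j by (intro powr_mono) auto
    finally show "real (K choose j) \<le> real K powr f K" .
  qed
  also have "\<dots> = real (card {j. j \<le> K \<and> real j > real K - f K}) * real K powr f K" by simp
  also have "\<dots> \<le> (real K + 1) * real K powr f K"
  proof (rule mult_right_mono)
    have "card {j. j \<le> K \<and> real j > real K - f K} \<le> card {..K}"
      by (intro card_mono) auto
    thus "real (card {j. j \<le> K \<and> real j > real K - f K}) \<le> real K + 1" by simp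
  qed simp
  finally show ?thesis .
qed

lemma choose_sum2:
  "(\<Sum>j\<in>{j. j \<le> K \<and> real j > real K - f K}. real (K choose j)) \<le> 2 ^ K"
proof -
  have "(\<Sum>j\<in>{j. j \<le> K \<and> real j > real K - f K}. real (K choose j)) \<le> (\<Sum>j\<in>{..K}. real (K choose j))"
    by (intro sum_mono2) auto
  also have "\<dots> = real (\<Sum>j\<in>{..K}. K choose j)" by simp
  also have "\<dots> = 2 ^ K" by (simp only: choose_row_sum) simp
  finally show ?thesis .
qed

lemma lp_zero: "K \<ge> 1 \<Longrightarrow> f K < real K \<Longrightarrow> lili_prob f K 0 = 0"
  by (subst lp_sum) (auto intro!: sum.neutral simp: zero_power)

lemma lp_one: "K \<ge> 1 \<Longrightarrow> 0 < f K \<Longrightarrow> lili_prob f K 1 = 1"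
proof -
  assume K: "K \<ge> 1" "0 < f K"
  have "lili_prob f K 1 = (\<Sum>j\<in>{j. j \<le> K \<and> real j > real K - f K}. real (K choose j) * 1^j * (1-1)^(K-j))"
    by (rule lp_sum) auto
  also have "\<dots> = (\<Sum>j\<in>{K}. real (K choose j) * 1^j * (1-1)^(K-j))"
    by (rule sum.mono_neutral_right) (use K in auto)
  finally show ?thesis by simp
qed

lemma lp_cont:
  assumes "\<And>n. 0 \<le> pn n \<and> pn n \<le> 1" "pn \<longlonglongrightarrow> p"
  shows "(\<lambda>n. lili_prob f K (pn n)) \<longlonglongrightarrow> lili_prob f K p"
proof -
  have p: "0 \<le> p" "p \<le> 1"
    using assms by (auto intro: LIMSEQ_le_const LIMSEQ_le_const2)
  have "(\<lambda>n. (\<Sum>j\<in>{j. j \<le> K \<and> real j > real K - f K}. real (K choose j) * pn n^j * (1-pn n)^(K-j)))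
     \<longlonglongrightarrow> (\<Sum>j\<in>{j. j \<le> K \<and> real j > real K - f K}. real (K choose j) * p^j * (1-p)^(K-j))"
    by (intro tendsto_intros assms)
  thus ?thesis using assms p by (simp add: lp_sum)
qed



lemma exp_pow: "0 < p \<Longrightarrow> exp (real K * ln p) = p ^ K"
  by (metis exp_ln ln_realpow zero_less_power)

lemma exp_form:
  assumes "K \<ge> 1" "0 < p"
  shows "(real K + 1) * real K powr f K * (p^K / p powr f K) =
    exp (real K * (ln (real K + 1) / real K + f K * ln (real K) / real K - (f K / real K) * ln p + ln p))"
proof -
  have K: "real K > 0" using assms by simp
  have "real K * (ln (real K + 1) / real K + f K * ln (real K) / real K - (f K / real K) * ln p + ln p)
      = ln (real K + 1) + f K * ln (real K) - f K * ln p + real K * ln p"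
    using K by (simp add: field_simps)
  moreover have "exp (ln (real K + 1) + f K * ln (real K) - f K * ln p + real K * ln p)
     = (real K + 1) * real K powr f K * (p^K / p powr f K)"
    using K assms by (simp add: exp_add exp_diff powr_def exp_pow mult.commute)
  ultimately show ?thesis by simp
qed

lemma exp_form2:
  assumes "K \<ge> 1" "0 < p"
  shows "2^K * (p^K / p powr f K) =
    exp (real K * (ln (2 * p) - (f K / real K) * ln p))"
proof -
  have K: "real K > 0" using assms by simp
  have "real K * (ln (2 * p) - (f K / real K) * ln p) = real K * ln (2*p) - f K * ln p"
    using K by (simp add: field_simps)
  moreover have "exp (real K * ln (2*p) - f K * ln p) = 2^K * (p^K / p powr f K)"
    using K assms by (simp add: exp_diff powr_def exp_pow power_mult_distrib)
  ultimately show ?thesis by simp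
qed

lemma exp_to0:
  assumes "h \<longlonglongrightarrow> d" "d < 0"
  shows "(\<lambda>K. exp (real K * h K)) \<longlonglongrightarrow> 0"
proof -
  have "filterlim (\<lambda>K. h K * real K) at_bot sequentially"
    by (rule filterlim_tendsto_neg_mult_at_bot[OF assms]) (rule filterlim_real_sequentially)
  hence "filterlim (\<lambda>K. real K * h K) at_bot sequentially" by (simp add: mult.commute)
  thus ?thesis by (rule filterlim_compose[OF exp_at_bot])
qed

lemma fK_over_K:
  assumes "(\<lambda>K. f K * ln (real K) / real K) \<longlonglongrightarrow> c"
  shows "(\<lambda>K. f K / real K) \<longlonglongrightarrow> 0"
proof -
  have i: "(\<lambda>K::nat. 1 / ln (real K)) \<longlonglongrightarrow> 0" by real_asymp
  have "(\<lambda>K. (f K * ln (real K) / real K) * (1 / ln (real K))) \<longlonglongrightarrow> c * 0"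
    by (intro tendsto_mult assms i)
  moreover have "eventually (\<lambda>K. (f K * ln (real K) / real K) * (1 / ln (real K)) = f K / real K) sequentially"
    using eventually_ge_at_top[of "2::nat"]
  proof eventually_elim
    case (elim K)
    hence "ln (real K) > 0" by simp
    thus ?case by (simp add: field_simps)
  qed
  ultimately show ?thesis by (simp add: tendsto_cong)
qed



lemma lili_from:
  assumes "\<And>n. 0 \<le> pn n \<and> pn n \<le> 1" "pn \<longlonglongrightarrow> p"
    and "(\<lambda>K. lili_prob f K p) \<longlonglongrightarrow> c"
  shows "lili_limit_is f pn c"
proof -
  have t: "\<And>K. (\<lambda>n. lili_prob f K (pn n)) \<longlonglongrightarrow> lili_prob f K p"
    by (rule lp_cont[OF assms(1,2)])
  hence "\<And>K. lim (\<lambda>n. lili_prob f K (pn n)) = lili_prob f K p" by (rule limI)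
  thus ?thesis unfolding lili_limit_is_def using t assms(3)
    by (auto simp: convergent_def)
qed

lemma lp_nonneg: "0 \<le> lili_prob f K q"
  unfolding lili_prob_def by simp

theorem mainTheorem13:
  fixes f :: "nat \<Rightarrow> real" and pn :: "nat \<Rightarrow> real" and p :: real
  assumes tol: "\<And>K. K \<ge> 1 \<Longrightarrow> 0 < f K \<and> f K < real K"
    and pn_prob: "\<And>n. 0 \<le> pn n \<and> pn n \<le> 1"
    and pn_lim: "pn \<longlonglongrightarrow> p"
  shows "(p < 1 \<longrightarrow> (\<forall>c. ((\<lambda>K. f K * ln (real K) / real K) \<longlonglongrightarrow> c)
                       \<longrightarrow> (p = 0 \<or> c < - ln p) \<longrightarrow> lili_limit_is f pn 0))
    \<and> (p < 1/2 \<longrightarrow> ((\<lambda>K. f K / real K) \<longlonglongrightarrow> 0) \<longrightarrow> lili_limit_is f pn 0)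
    \<and> (p = 1 \<longrightarrow> lili_limit_is f pn 1)"
proof -
  have p: "0 \<le> p" "p \<le> 1"
    using pn_prob pn_lim by (auto intro: LIMSEQ_le_const LIMSEQ_le_const2)
  have zero: "(\<lambda>K. lili_prob f K 0) \<longlonglongrightarrow> 0"
  proof -
    have "eventually (\<lambda>K. 0 = lili_prob f K 0) sequentially"
      using eventually_ge_at_top[of "1::nat"] by eventually_elim (use tol lp_zero in auto)
    thus ?thesis by (rule Lim_transform_eventually[OF tendsto_const])
  qed
  have P1: "lili_limit_is f pn 0"
    if p1: "p < 1" and c: "(\<lambda>K. f K * ln (real K) / real K) \<longlonglongrightarrow> c" and pc: "p = 0 \<or> c < - ln p" for c
  proof (rule lili_from[OF pn_prob pn_lim])
    show "(\<lambda>K. lili_prob f K p) \<longlonglongrightarrow> 0"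
    proof (cases "p = 0")
      case True thus ?thesis using zero by simp
    next
      case False
      hence pp: "0 < p" "c < - ln p" using p pc by auto
      define h where "h K = ln (real K + 1) / real K + f K * ln (real K) / real K - (f K / real K) * ln p + ln p" for K
      have "h \<longlonglongrightarrow> 0 + c - 0 * ln p + ln p"
        unfolding h_def
        by (intro tendsto_intros c fK_over_K[OF c]) real_asymp
      hence e: "(\<lambda>K. exp (real K * h K)) \<longlonglongrightarrow> 0"
        by (rule exp_to0) (use pp in simp)
      show ?thesis
      proof (rule tendsto_sandwich[OF _ _ tendsto_const e])
        show "eventually (\<lambda>K. 0 \<le> lili_prob f K p) sequentially" by (simp add: lp_nonneg)
        show "eventually (\<lambda>K. lili_prob f K p \<le> exp (real K * h K)) sequentially"
          using eventually_ge_at_top[of "1::nat"]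
        proof eventually_elim
          case (elim K)
          have "lili_prob f K p \<le> (\<Sum>j\<in>{j. j \<le> K \<and> real j > real K - f K}. real (K choose j)) * (p^K / p powr f K)"
            using pp p1 by (intro lp_bound) auto
          also have "\<dots> \<le> ((real K + 1) * real K powr f K) * (p^K / p powr f K)"
            using elim pp by (intro mult_right_mono choose_sum1) auto
          also have "\<dots> = exp (real K * h K)"
            unfolding h_def by (rule exp_form[OF elim pp(1)])
          finally show ?case .
        qed
      qed
    qed
  qed
  have P2: "lili_limit_is f pn 0"
    if p1: "p < 1/2" and c: "(\<lambda>K. f K / real K) \<longlonglongrightarrow> 0"
  proof (rule lili_from[OF pn_prob pn_lim])
    show "(\<lambda>K. lili_prob f K p) \<longlonglongrightarrow> 0"
    proof (cases "p = 0")
      case True thus ?thesis using zero by simp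
    next
      case False
      hence pp: "0 < p" using p by auto
      define h where "h K = ln (2 * p) - (f K / real K) * ln p" for K
      have "h \<longlonglongrightarrow> ln (2 * p) - 0 * ln p"
        unfolding h_def by (intro tendsto_intros c)
      hence e: "(\<lambda>K. exp (real K * h K)) \<longlonglongrightarrow> 0"
        by (rule exp_to0) (use pp p1 in simp)
      show ?thesis
      proof (rule tendsto_sandwich[OF _ _ tendsto_const e])
        show "eventually (\<lambda>K. 0 \<le> lili_prob f K p) sequentially" by (simp add: lp_nonneg)
        show "eventually (\<lambda>K. lili_prob f K p \<le> exp (real K * h K)) sequentially"
          using eventually_ge_at_top[of "1::nat"]
        proof eventually_elim
          case (elim K)
          have "lili_prob f K p \<le> (\<Sum>j\<in>{j. j \<le> K \<and> real j > real K - f K}. real (K choose j)) * (p^K / p powr f K)"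
            using pp p1 by (intro lp_bound) auto
          also have "\<dots> \<le> 2^K * (p^K / p powr f K)"
            using elim pp by (intro mult_right_mono choose_sum2) auto
          also have "\<dots> = exp (real K * h K)"
            unfolding h_def by (rule exp_form2[OF elim pp(1)])
          finally show ?case .
        qed
      qed
    qed
  qed
  have P3: "lili_limit_is f pn 1" if "p = 1"
  proof (rule lili_from[OF pn_prob pn_lim])
    have "eventually (\<lambda>K. 1 = lili_prob f K 1) sequentially"
      using eventually_ge_at_top[of "1::nat"] by eventually_elim (use tol lp_one in auto)
    hence "(\<lambda>K. lili_prob f K 1) \<longlonglongrightarrow> 1" by (rule Lim_transform_eventually[OF tendsto_const])
    thus "(\<lambda>K. lili_prob f K p) \<longlonglongrightarrow> 1" using that by simp
  qed
  show ?thesis using P1 P2 P3 by blast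
qed


end
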